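(* Let $f:Y\to X$ be a covering of finite connected graphs. Consider the exact sequences \[ 0\to\mathbb{Z}\xrightarrow{\iota_Y}\mathrm{Div}(Y)\xrightarrow{\mathcal{L}_Y}\mathrm{Div}(Y)\to\mathrm{Pic}(Y)\to0 \] and \[ 0\to\mathbb{Z}\xrightarrow{\iota_X}\mathrm{Div}(X)\xrightarrow{\mathcal{L}_X}\mathrm{Div}(X)\to\mathrm{Pic}(X)\to0. \] The vertical maps are multiplication by $[Y:X]$ on $\mathbb{Z}$, $f_{\mathsf r}$ on the first $\mathrm{Div}$, $f_*$ on the second $\mathrm{Div}$, and the map $\mathrm{Pic}(Y)\to\mathrm{Pic}(X)$ induced by $f_*$. These vertical maps make the resulting diagram commute. Explicitly, $f_{\mathsf r}\circ\iota_Y=[Y:X]\,\iota_X$ and $f_*\circ\mathcal{L}_Y=\mathcal{L}_X\circ f_{\mathsf r}$. Moreover, $f_*$ and the induced map $\mathrm{Pic}(Y)\to\mathrm{Pic}(X)$ are surjective.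
   Context: A finite graph $X$ consists of a finite vertex set $V_X$, a finite edge set $\mathbb{E}_X$, a fixed-point-free involution $e\mapsto\bar e$, and maps $s,t:\mathbb{E}_X\to V_X$ with $s(\bar e)=t(e)$ and $t(\bar e)=s(e)$. $\mathbb{E}_{X,v}=\{e\in\mathbb{E}_X: s(e)=v\}$. A morphism $f:Y\to X$ consists of maps $f_V$, $f_{\mathbb{E}}$ compatible with $s$, $t$ and the involution. It is a covering if for each $w\in V_Y$ there is a positive integer $m_w(f)$ such that $f_{\mathbb{E}}:\mathbb{E}_{Y,w}\to\mathbb{E}_{X,f_V(w)}$ is $m_w(f)$-to-one. The degree is $[Y:X]=\sum_{w\in f_V^{-1}(v)}m_w(f)$, which is independent of $v\in V_X$ when $X$ is connected. $\mathrm{Div}(X)=\bigoplus_{v\in V_X}\mathbb{Z}[v]$. The Laplacian $\mathcal{L}_X:\mathrm{Div}(X)\to\mathrm{Div}(X)$ is $\mathcal{L}_X([v])=\sum_{e\in\mathbb{E}_{X,v}}([v]-[t(e)])$, and $\mathrm{Pic}(X)=\mathrm{coker}\,\mathcal{L}_X$. The map $\iota_X:\mathbb{Z}\to\mathrm{Div}(X)$ sends $1$ to $\sum_{v\in V_X}[v]$, and for connected $X$ the displayed rows are exact. The homomorphisms $f_*,f_{\mathsf r}:\mathrm{Div}(Y)\to\mathrm{Div}(X)$ are defined by $f_*([w])=[f_V(w)]$ and $f_{\mathsf r}([w])=m_w(f)[f_V(w)]$. *)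

theory Defs
  imports Main
begin

record ('v, 'e) fgraph =
  verts :: "'v set"
  arcs  :: "'e set"
  rev   :: "'e \<Rightarrow> 'e"
  src   :: "'e \<Rightarrow> 'v"
  tgt   :: "'e \<Rightarrow> 'v"

definition finite_graph :: "('v, 'e) fgraph \<Rightarrow> bool" where
  "finite_graph X \<longleftrightarrow> finite (verts X) \<and> finite (arcs X) \<and>
     (\<forall>e \<in> arcs X. rev X e \<in> arcs X \<and> rev X e \<noteq> e \<and> rev X (rev X e) = e \<and>
        src X e \<in> verts X \<and> tgt X e \<in> verts X \<and>
        src X (rev X e) = tgt X e \<and> tgt X (rev X e) = src X e)"

definition connected_graph :: "('v, 'e) fgraph \<Rightarrow> bool" where
  "connected_graph X \<longleftrightarrow> verts X \<noteq> {} \<and>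
     (\<forall>u \<in> verts X. \<forall>v \<in> verts X.
        (u, v) \<in> {(src X e, tgt X e) | e. e \<in> arcs X}\<^sup>*)"

definition out_arcs :: "('v, 'e) fgraph \<Rightarrow> 'v \<Rightarrow> 'e set" where
  "out_arcs X v = {e \<in> arcs X. src X e = v}"

definition graph_morphism ::
  "('w, 'f) fgraph \<Rightarrow> ('v, 'e) fgraph \<Rightarrow> ('w \<Rightarrow> 'v) \<Rightarrow> ('f \<Rightarrow> 'e) \<Rightarrow> bool" where
  "graph_morphism Y X fV fE \<longleftrightarrow> fV ` verts Y \<subseteq> verts X \<and> fE ` arcs Y \<subseteq> arcs X \<and>
     (\<forall>e \<in> arcs Y. src X (fE e) = fV (src Y e) \<and> tgt X (fE e) = fV (tgt Y e) \<and>
        fE (rev Y e) = rev X (fE e))"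

definition covering ::
  "('w, 'f) fgraph \<Rightarrow> ('v, 'e) fgraph \<Rightarrow> ('w \<Rightarrow> 'v) \<Rightarrow> ('f \<Rightarrow> 'e) \<Rightarrow> ('w \<Rightarrow> nat) \<Rightarrow> bool" where
  "covering Y X fV fE m \<longleftrightarrow> graph_morphism Y X fV fE \<and>
     (\<forall>w \<in> verts Y. m w > 0 \<and>
        (\<forall>e \<in> out_arcs X (fV w). card {e' \<in> out_arcs Y w. fE e' = e} = m w))"

definition cover_degree ::
  "('w, 'f) fgraph \<Rightarrow> ('v, 'e) fgraph \<Rightarrow> ('w \<Rightarrow> 'v) \<Rightarrow> ('w \<Rightarrow> nat) \<Rightarrow> int" where
  "cover_degree Y X fV m =
     (let v = (SOME v. v \<in> verts X) in (\<Sum>w \<in> {w \<in> verts Y. fV w = v}. int (m w)))"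

definition Div :: "('v, 'e) fgraph \<Rightarrow> ('v \<Rightarrow> int) set" where
  "Div X = {D. \<forall>v. v \<notin> verts X \<longrightarrow> D v = 0}"

definition delta :: "'v \<Rightarrow> 'v \<Rightarrow> int" where
  "delta v u = (if u = v then 1 else 0)"

text \<open>Laplacian, the linear extension of [v] \<mapsto> sum over e in E_v of ([v] - [t e]).\<close>
definition laplacian :: "('v, 'e) fgraph \<Rightarrow> ('v \<Rightarrow> int) \<Rightarrow> ('v \<Rightarrow> int)" where
  "laplacian X D = (\<lambda>u. \<Sum>v \<in> verts X. D v * (\<Sum>e \<in> out_arcs X v. delta v u - delta (tgt X e) u))"

definition iota :: "('v, 'e) fgraph \<Rightarrow> int \<Rightarrow> ('v \<Rightarrow> int)" where
  "iota X n = (\<lambda>u. if u \<in> verts X then n else 0)"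

definition pushforward :: "('w, 'f) fgraph \<Rightarrow> ('w \<Rightarrow> 'v) \<Rightarrow> ('w \<Rightarrow> int) \<Rightarrow> ('v \<Rightarrow> int)" where
  "pushforward Y fV D = (\<lambda>v. \<Sum>w \<in> {w \<in> verts Y. fV w = v}. D w)"

text \<open>f_r : [w] \<mapsto> m_w [fV w], extended linearly.\<close>
definition ramified_push ::
  "('w, 'f) fgraph \<Rightarrow> ('w \<Rightarrow> 'v) \<Rightarrow> ('w \<Rightarrow> nat) \<Rightarrow> ('w \<Rightarrow> int) \<Rightarrow> ('v \<Rightarrow> int)" where
  "ramified_push Y fV m D = (\<lambda>v. \<Sum>w \<in> {w \<in> verts Y. fV w = v}. int (m w) * D w)"

end

theory Submission
  imports Defs
begin

lemma arc_count:
  assumes fY: "finite_graph Y" and fX: "finite_graph X" and cov: "covering Y X fV fE m"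
    and e: "e \<in> arcs X"
  shows "card {e' \<in> arcs Y. fE e' = e} = (\<Sum>w \<in> {w \<in> verts Y. fV w = src X e}. m w)"
proof -
  have mor: "graph_morphism Y X fV fE" using cov unfolding covering_def by blast
  let ?A = "{e' \<in> arcs Y. fE e' = e}"
  let ?T = "{w \<in> verts Y. fV w = src X e}"
  have finA: "finite ?A" using fY unfolding finite_graph_def by auto
  have finT: "finite ?T" using fY unfolding finite_graph_def by auto
  have img: "src Y ` ?A \<subseteq> ?T" using mor fY unfolding graph_morphism_def finite_graph_def by auto
  have "card ?A = (\<Sum>e'\<in>?A. 1)" by simp
  also have "\<dots> = (\<Sum>w\<in>?T. \<Sum>e'\<in>{x. x \<in> ?A \<and> src Y x = w}. 1)"
    using sum.group[OF finA finT img, of "\<lambda>_. 1::nat"] by simp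
  also have "\<dots> = (\<Sum>w\<in>?T. m w)"
  proof (rule sum.cong[OF refl])
    fix w assume w: "w \<in> ?T"
    have "{x. x \<in> ?A \<and> src Y x = w} = {e' \<in> out_arcs Y w. fE e' = e}"
      unfolding out_arcs_def by auto
    moreover have "e \<in> out_arcs X (fV w)" using w e unfolding out_arcs_def by auto
    ultimately show "(\<Sum>e'\<in>{x. x \<in> ?A \<and> src Y x = w}. 1) = m w"
      using cov w unfolding covering_def by auto
  qed
  finally show ?thesis .
qed

lemma fib_step:
  assumes fY: "finite_graph Y" and fX: "finite_graph X" and cov: "covering Y X fV fE m"
    and e: "e \<in> arcs X"
  shows "(\<Sum>w \<in> {w \<in> verts Y. fV w = src X e}. m w) = (\<Sum>w \<in> {w \<in> verts Y. fV w = tgt X e}. m w)"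
proof -
  have mor: "graph_morphism Y X fV fE" using cov unfolding covering_def by blast
  have re: "rev X e \<in> arcs X" and st: "src X (rev X e) = tgt X e"
    using fX e unfolding finite_graph_def by auto
  have "bij_betw (rev Y) {e' \<in> arcs Y. fE e' = e} {e' \<in> arcs Y. fE e' = rev X e}"
  proof (rule bij_betw_byWitness[where f'="rev Y"])
    show "\<forall>a\<in>{e' \<in> arcs Y. fE e' = e}. rev Y (rev Y a) = a"
      using fY unfolding finite_graph_def by auto
    show "\<forall>a\<in>{e' \<in> arcs Y. fE e' = rev X e}. rev Y (rev Y a) = a"
      using fY unfolding finite_graph_def by auto
    show "rev Y ` {e' \<in> arcs Y. fE e' = e} \<subseteq> {e' \<in> arcs Y. fE e' = rev X e}"
      using fY mor unfolding finite_graph_def graph_morphism_def by auto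
    show "rev Y ` {e' \<in> arcs Y. fE e' = rev X e} \<subseteq> {e' \<in> arcs Y. fE e' = e}"
    proof
      fix x assume "x \<in> rev Y ` {e' \<in> arcs Y. fE e' = rev X e}"
      then obtain a where a: "a \<in> arcs Y" "fE a = rev X e" "x = rev Y a" by auto
      have "rev Y a \<in> arcs Y" using a fY unfolding finite_graph_def by auto
      moreover have "fE (rev Y a) = rev X (rev X e)" using a mor unfolding graph_morphism_def by auto
      moreover have "rev X (rev X e) = e" using fX e unfolding finite_graph_def by auto
      ultimately show "x \<in> {e' \<in> arcs Y. fE e' = e}" using a by auto
    qed
  qed
  then have "card {e' \<in> arcs Y. fE e' = e} = card {e' \<in> arcs Y. fE e' = rev X e}"
    by (rule bij_betw_same_card)
  then show ?thesis using arc_count[OF fY fX cov e] arc_count[OF fY fX cov re] st by simp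
qed

lemma fib_const:
  assumes fY: "finite_graph Y" and fX: "finite_graph X" and cX: "connected_graph X"
    and cov: "covering Y X fV fE m" and u: "u \<in> verts X" and v: "v \<in> verts X"
  shows "(\<Sum>w \<in> {w \<in> verts Y. fV w = u}. m w) = (\<Sum>w \<in> {w \<in> verts Y. fV w = v}. m w)"
proof -
  have "(u, v) \<in> {(src X e, tgt X e) | e. e \<in> arcs X}\<^sup>*" using cX u v unfolding connected_graph_def by blast
  then show ?thesis
  proof (induction rule: rtrancl_induct)
    case base then show ?case by simp
  next
    case (step y z)
    then obtain e where "e \<in> arcs X" "y = src X e" "z = tgt X e" by auto
    then show ?case using step.IH fib_step[OF fY fX cov] by simp
  qed
qed

lemma cov_sum:
  assumes fY: "finite_graph Y" and fX: "finite_graph X" and cov: "covering Y X fV fE m"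
    and w: "w \<in> verts Y"
  shows "(\<Sum>e'\<in>out_arcs Y w. g (fE e')) = int (m w) * (\<Sum>e\<in>out_arcs X (fV w). g e)"
proof -
  have mor: "graph_morphism Y X fV fE" using cov unfolding covering_def by blast
  let ?S = "out_arcs Y w" and ?T = "out_arcs X (fV w)"
  have finS: "finite ?S" using fY unfolding finite_graph_def out_arcs_def by auto
  have finT: "finite ?T" using fX unfolding finite_graph_def out_arcs_def by auto
  have img: "fE ` ?S \<subseteq> ?T" using mor unfolding graph_morphism_def out_arcs_def by auto
  have "(\<Sum>e'\<in>?S. g (fE e')) = (\<Sum>e\<in>?T. \<Sum>e'\<in>{x. x \<in> ?S \<and> fE x = e}. g (fE e'))"
    using sum.group[OF finS finT img, of "\<lambda>e'. g (fE e')"] by simp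
  also have "\<dots> = (\<Sum>e\<in>?T. int (m w) * g e)"
  proof (rule sum.cong[OF refl])
    fix e assume e: "e \<in> ?T"
    have "(\<Sum>e'\<in>{x. x \<in> ?S \<and> fE x = e}. g (fE e')) = (\<Sum>e'\<in>{x. x \<in> ?S \<and> fE x = e}. g e)"
      by simp
    also have "\<dots> = int (card {x. x \<in> ?S \<and> fE x = e}) * g e" by simp
    also have "card {x. x \<in> ?S \<and> fE x = e} = m w" using cov w e unfolding covering_def by auto
    finally show "(\<Sum>e'\<in>{x. x \<in> ?S \<and> fE x = e}. g (fE e')) = int (m w) * g e" .
  qed
  also have "\<dots> = int (m w) * (\<Sum>e\<in>?T. g e)" by (simp add: sum_distrib_left)
  finally show ?thesis .
qed


lemma fib_nonempty:
  assumes fY: "finite_graph Y" and cY: "connected_graph Y" and fX: "finite_graph X" and cX: "connected_graph X"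
    and cov: "covering Y X fV fE m" and v: "v \<in> verts X"
  shows "\<exists>w \<in> verts Y. fV w = v"
proof -
  have mor: "graph_morphism Y X fV fE" using cov unfolding covering_def by blast
  obtain w0 where w0: "w0 \<in> verts Y" using cY unfolding connected_graph_def by auto
  have w0X: "fV w0 \<in> verts X" using mor w0 unfolding graph_morphism_def by auto
  have fin: "finite {w \<in> verts Y. fV w = fV w0}" using fY unfolding finite_graph_def by auto
  have "m w0 \<le> (\<Sum>w \<in> {w \<in> verts Y. fV w = fV w0}. m w)"
    by (rule member_le_sum) (use w0 fin in auto)
  moreover have "m w0 > 0" using cov w0 unfolding covering_def by auto
  ultimately have "(\<Sum>w \<in> {w \<in> verts Y. fV w = v}. m w) > 0"
    using fib_const[OF fY fX cX cov w0X v] by simp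
  then have "{w \<in> verts Y. fV w = v} \<noteq> {}" by (metis sum.empty less_irrefl)
  then show ?thesis by auto
qed

theorem proposition3p1:
  fixes Y :: "('w, 'f) fgraph" and X :: "('v, 'e) fgraph"
    and fV :: "'w \<Rightarrow> 'v" and fE :: "'f \<Rightarrow> 'e" and m :: "'w \<Rightarrow> nat"
  assumes "finite_graph Y" and "connected_graph Y"
    and "finite_graph X" and "connected_graph X"
    and "covering Y X fV fE m"
  shows "(\<forall>n::int. ramified_push Y fV m (iota Y n) = iota X (cover_degree Y X fV m * n))
       \<and> (\<forall>D \<in> Div Y. pushforward Y fV (laplacian Y D) = laplacian X (ramified_push Y fV m D))
       \<and> pushforward Y fV ` Div Y = Div X
       \<and> (\<forall>D \<in> Div X. \<exists>D' \<in> Div Y. pushforward Y fV D' - D \<in> laplacian X ` Div X)"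
proof -
  note fY = assms(1) and cY = assms(2) and fX = assms(3) and cX = assms(4) and cov = assms(5)
  have mor: "graph_morphism Y X fV fE" using cov unfolding covering_def by blast
  have fVY: "\<And>w. w \<in> verts Y \<Longrightarrow> fV w \<in> verts X" using mor unfolding graph_morphism_def by auto
  have finVY: "finite (verts Y)" and finVX: "finite (verts X)"
    using fY fX unfolding finite_graph_def by auto
  have fibfin: "\<And>v. finite {w \<in> verts Y. fV w = v}" using finVY by auto
  have P1: "\<forall>n::int. ramified_push Y fV m (iota Y n) = iota X (cover_degree Y X fV m * n)"
  proof
    fix n :: int
    show "ramified_push Y fV m (iota Y n) = iota X (cover_degree Y X fV m * n)"
    proof
      fix v
      have "ramified_push Y fV m (iota Y n) v = (\<Sum>w \<in> {w \<in> verts Y. fV w = v}. int (m w) * n)"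
        unfolding ramified_push_def iota_def by (rule sum.cong) auto
      also have "\<dots> = int (\<Sum>w \<in> {w \<in> verts Y. fV w = v}. m w) * n"
        by (simp add: sum_distrib_right)
      finally have eq: "ramified_push Y fV m (iota Y n) v = int (\<Sum>w \<in> {w \<in> verts Y. fV w = v}. m w) * n" .
      show "ramified_push Y fV m (iota Y n) v = iota X (cover_degree Y X fV m * n) v"
      proof (cases "v \<in> verts X")
        case True
        have ne: "verts X \<noteq> {}" using True by auto
        let ?v0 = "SOME v. v \<in> verts X"
        have v0: "?v0 \<in> verts X" using True by (rule someI)
        have "cover_degree Y X fV m = int (\<Sum>w \<in> {w \<in> verts Y. fV w = ?v0}. m w)"
          unfolding cover_degree_def Let_def by simp
        also have "\<dots> = int (\<Sum>w \<in> {w \<in> verts Y. fV w = v}. m w)"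
          using fib_const[OF fY fX cX cov v0 True] by simp
        finally show ?thesis using eq True unfolding iota_def by simp
      next
        case False
        then have "{w \<in> verts Y. fV w = v} = {}" using fVY by auto
        then have "(\<Sum>w \<in> {w \<in> verts Y. fV w = v}. m w) = 0" by (simp only: sum.empty)
        then show ?thesis using eq False unfolding iota_def by simp
      qed
    qed
  qed
  have P2: "\<forall>D \<in> Div Y. pushforward Y fV (laplacian Y D) = laplacian X (ramified_push Y fV m D)"
  proof (intro ballI ext)
    fix D v
    let ?L = "\<lambda>x. (\<Sum>e\<in>out_arcs X x. delta x v - delta (tgt X e) v)"
    have "pushforward Y fV (laplacian Y D) v =
       (\<Sum>u\<in>{w \<in> verts Y. fV w = v}. \<Sum>w\<in>verts Y. D w * (\<Sum>e'\<in>out_arcs Y w. delta w u - delta (tgt Y e') u))"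
      unfolding pushforward_def laplacian_def by simp
    also have "\<dots> = (\<Sum>w\<in>verts Y. \<Sum>u\<in>{w \<in> verts Y. fV w = v}. D w * (\<Sum>e'\<in>out_arcs Y w. delta w u - delta (tgt Y e') u))"
      by (rule sum.swap)
    also have "\<dots> = (\<Sum>w\<in>verts Y. D w * (\<Sum>e'\<in>out_arcs Y w. \<Sum>u\<in>{w \<in> verts Y. fV w = v}. delta w u - delta (tgt Y e') u))"
      by (simp add: sum_distrib_left sum.swap[of _ "{w \<in> verts Y. fV w = v}"])
    also have "\<dots> = (\<Sum>w\<in>verts Y. D w * (\<Sum>e'\<in>out_arcs Y w. delta (fV w) v - delta (tgt X (fE e')) v))"
    proof (rule sum.cong[OF refl])
      fix w assume w: "w \<in> verts Y"
      have "(\<Sum>e'\<in>out_arcs Y w. \<Sum>u\<in>{w \<in> verts Y. fV w = v}. delta w u - delta (tgt Y e') u)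
          = (\<Sum>e'\<in>out_arcs Y w. delta (fV w) v - delta (tgt X (fE e')) v)"
      proof (rule sum.cong[OF refl])
        fix e' assume e': "e' \<in> out_arcs Y w"
        have t: "tgt Y e' \<in> verts Y" and tt: "tgt X (fE e') = fV (tgt Y e')"
          using e' fY mor unfolding out_arcs_def finite_graph_def graph_morphism_def by auto
        have d: "\<And>z. z \<in> verts Y \<Longrightarrow> (\<Sum>u\<in>{w \<in> verts Y. fV w = v}. delta z u) = delta (fV z) v"
        proof -
          fix z assume z: "z \<in> verts Y"
          have "(\<Sum>u\<in>{w \<in> verts Y. fV w = v}. delta z u) = (\<Sum>u\<in>{w \<in> verts Y. fV w = v}. if z = u then 1 else 0)"
            unfolding delta_def by (rule sum.cong) auto
          also have "\<dots> = (if z \<in> {w \<in> verts Y. fV w = v} then 1 else 0)"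
            using fibfin[of v] by (simp add: sum.delta)
          finally show "(\<Sum>u\<in>{w \<in> verts Y. fV w = v}. delta z u) = delta (fV z) v"
            using z unfolding delta_def by auto
        qed
        show "(\<Sum>u\<in>{w \<in> verts Y. fV w = v}. delta w u - delta (tgt Y e') u) = delta (fV w) v - delta (tgt X (fE e')) v"
          using d[OF w] d[OF t] tt by (simp add: sum_subtractf)
      qed
      then show "D w * (\<Sum>e'\<in>out_arcs Y w. \<Sum>u\<in>{w \<in> verts Y. fV w = v}. delta w u - delta (tgt Y e') u)
          = D w * (\<Sum>e'\<in>out_arcs Y w. delta (fV w) v - delta (tgt X (fE e')) v)" by simp
    qed
    also have "\<dots> = (\<Sum>w\<in>verts Y. D w * (int (m w) * ?L (fV w)))"
    proof (rule sum.cong[OF refl])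
      fix w assume w: "w \<in> verts Y"
      show "D w * (\<Sum>e'\<in>out_arcs Y w. delta (fV w) v - delta (tgt X (fE e')) v) = D w * (int (m w) * ?L (fV w))"
        using cov_sum[OF fY fX cov w, of "\<lambda>e. delta (fV w) v - delta (tgt X e) v"] by simp
    qed
    also have "\<dots> = (\<Sum>x\<in>verts X. \<Sum>w\<in>{w. w \<in> verts Y \<and> fV w = x}. D w * (int (m w) * ?L (fV w)))"
    proof -
      have "fV ` verts Y \<subseteq> verts X" using fVY by auto
      from sum.group[OF finVY finVX this, of "\<lambda>w. D w * (int (m w) * ?L (fV w))"]
      show ?thesis by (rule sym)
    qed
    also have "\<dots> = (\<Sum>x\<in>verts X. (\<Sum>w\<in>{w. w \<in> verts Y \<and> fV w = x}. int (m w) * D w) * ?L x)"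
    proof (rule sum.cong[OF refl])
      fix x assume "x \<in> verts X"
      have "(\<Sum>w\<in>{w. w \<in> verts Y \<and> fV w = x}. D w * (int (m w) * ?L (fV w)))
          = (\<Sum>w\<in>{w. w \<in> verts Y \<and> fV w = x}. (int (m w) * D w) * ?L x)"
        by (rule sum.cong) auto
      also have "\<dots> = (\<Sum>w\<in>{w. w \<in> verts Y \<and> fV w = x}. int (m w) * D w) * ?L x"
        by (rule sum_distrib_right[symmetric])
      finally show "(\<Sum>w\<in>{w. w \<in> verts Y \<and> fV w = x}. D w * (int (m w) * ?L (fV w)))
          = (\<Sum>w\<in>{w. w \<in> verts Y \<and> fV w = x}. int (m w) * D w) * ?L x" .
    qed
    also have "\<dots> = laplacian X (ramified_push Y fV m D) v"
      unfolding laplacian_def ramified_push_def by simp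
    finally show "pushforward Y fV (laplacian Y D) v = laplacian X (ramified_push Y fV m D) v" .
  qed
  have sec: "\<forall>v \<in> verts X. \<exists>w \<in> verts Y. fV w = v" using fib_nonempty[OF fY cY fX cX cov] by blast
  define s where "s v = (SOME w. w \<in> verts Y \<and> fV w = v)" for v
  have s: "\<And>v. v \<in> verts X \<Longrightarrow> s v \<in> verts Y \<and> fV (s v) = v"
    unfolding s_def using sec by (metis (mono_tags, lifting) someI)
  have P3: "pushforward Y fV ` Div Y = Div X"
  proof
    show "pushforward Y fV ` Div Y \<subseteq> Div X"
    proof
      fix E assume "E \<in> pushforward Y fV ` Div Y"
      then obtain D where E: "E = pushforward Y fV D" by auto
      show "E \<in> Div X" unfolding Div_def
      proof (intro CollectI allI impI)
        fix v assume "v \<notin> verts X"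
        then have em: "{w \<in> verts Y. fV w = v} = {}" using fVY by auto
        have "E v = (\<Sum>w\<in>{w \<in> verts Y. fV w = v}. D w)" unfolding E pushforward_def by simp
        then show "E v = 0" by (simp only: em sum.empty)
      qed
    qed
    show "Div X \<subseteq> pushforward Y fV ` Div Y"
    proof
      fix D assume D: "D \<in> Div X"
      define D' where "D' w = (if w \<in> verts Y \<and> w = s (fV w) then D (fV w) else 0)" for w
      have "D' \<in> Div Y" unfolding Div_def D'_def by auto
      moreover have "pushforward Y fV D' = D"
      proof
        fix v
        show "pushforward Y fV D' v = D v"
        proof (cases "v \<in> verts X")
          case True
          have "pushforward Y fV D' v = (\<Sum>w\<in>{w \<in> verts Y. fV w = v}. if s v = w then D v else 0)"
            unfolding pushforward_def D'_def by (rule sum.cong) auto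
          also have "\<dots> = D v" using s[OF True] fibfin[of v] by (simp add: sum.delta)
          finally show ?thesis .
        next
          case False
          then have em: "{w \<in> verts Y. fV w = v} = {}" using fVY by auto
          have "pushforward Y fV D' v = (\<Sum>w\<in>{w \<in> verts Y. fV w = v}. D' w)" unfolding pushforward_def by simp
          also have "\<dots> = 0" by (simp only: em sum.empty)
          finally show ?thesis using False D unfolding Div_def by simp
        qed
      qed
      ultimately show "D \<in> pushforward Y fV ` Div Y" by (metis image_eqI)
    qed
  qed
  have P4: "\<forall>D \<in> Div X. \<exists>D' \<in> Div Y. pushforward Y fV D' - D \<in> laplacian X ` Div X"
  proof
    fix D assume D: "D \<in> Div X"
    then obtain D' where D': "D' \<in> Div Y" "pushforward Y fV D' = D" using P3 by (metis imageE)
    have z: "(\<lambda>_. 0::int) \<in> Div X" unfolding Div_def by simp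
    have "pushforward Y fV D' - D = laplacian X (\<lambda>_. 0)"
      using D'(2) unfolding laplacian_def by (simp add: fun_eq_iff)
    then have "pushforward Y fV D' - D \<in> laplacian X ` Div X" using z by (metis image_eqI)
    then show "\<exists>D' \<in> Div Y. pushforward Y fV D' - D \<in> laplacian X ` Div X" using D' by blast
  qed
  show ?thesis using P1 P2 P3 P4 by blast
qed

end
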